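(* Let $r\in\mathbb Z_n$, $\mathsf V=\mathsf V(2,r)$, $k\ge2$, and $\lambda_r=q^{-r(r+1)}$. There is an algebra homomorphism $\mathsf H_k(q)\to\mathrm{End}_{\mathsf D_n}(\mathsf V^{\otimes k})$ sending $\mathsf s_i\mapsto\lambda_r^{-1}\check{\mathsf R}_i$ for $1\le i\le k-1$.
   Context: $\mathbb k$ algebraically closed of characteristic zero, $n\ge2$, $q\in\mathbb k$ a primitive $n$th root of unity. $\mathsf D_n$ is the Hopf algebra generated by $a,b,c,d$ with relations $ba=qab$, $db=qbd$, $bc=cb$, $ca=qac$, $dc=qcd$, $da-qad=1-bc$, $a^n=d^n=0$, $b^n=c^n=1$ and $\Delta(a)=a\otimes b+1\otimes a$, $\Delta(d)=d\otimes c+1\otimes d$, $\Delta(b)=b\otimes b$, $\Delta(c)=c\otimes c$. For $1\le\ell\le n$, $s\in\mathbb Z_n$, $\mathsf V(\ell,s)$ is the module with basis $v_1,\dots,v_\ell$ and action $a.v_j=v_{j+1}$ ($j<\ell$), $a.v_\ell=0$, $b.v_j=q^{s+j-1}v_j$, $c.v_j=q^{j-(s+\ell)}v_j$, $d.v_1=0$, $d.v_j=\alpha_{j-1}(\ell)v_{j-1}$ ($j>1$), $\alpha_i(\ell)=\frac{(q^i-1)(1-q^{i-\ell})}{q-1}$. With $[m]=1+q+\dots+q^{m-1}$, $[m]!=[m]\cdots[1]$, $[0]!=1$, the R-matrix is $\mathcal R=\frac1n\sum_{m,s,t=0}^{n-1}\frac{q^{-tm}}{[s]!}a^sb^t\otimes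 c^md^s$. $\mathsf R$ is the action of $\mathcal R$ on $\mathsf V\otimes\mathsf V$ ($a^sb^t$ on the first factor), $\sigma$ the flip, $\check{\mathsf R}=\sigma\mathsf R$, and $\check{\mathsf R}_i=\mathrm{id}^{\otimes(i-1)}\otimes\check{\mathsf R}\otimes\mathrm{id}^{\otimes(k-i-1)}$ acting on tensor slots $i,i+1$ of $\mathsf V^{\otimes k}$. The Iwahori–Hecke algebra $\mathsf H_k(q)$ is the $\mathbb k$-algebra with generators $\mathsf s_1,\dots,\mathsf s_{k-1}$ and relations $\mathsf s_i\mathsf s_j=\mathsf s_j\mathsf s_i$ ($|i-j|>1$), $\mathsf s_i\mathsf s_{i+1}\mathsf s_i=\mathsf s_{i+1}\mathsf s_i\mathsf s_{i+1}$ ($1\le i\le k-2$), $(\mathsf s_i-1)(\mathsf s_i+q^{-1})=0$ ($1\le i\le k-1$). *)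

theory Defs
  imports "HOL-Computational_Algebra.Polynomial"
begin

text \<open>Single-site operators on V(l,s) as matrices: entry (i,j) is the coefficient of
v_i in x.v_j, indices in 1..l.\<close>
type_synonym 'a smat = "nat \<Rightarrow> nat \<Rightarrow> 'a"

text \<open>Operators on V(l,s)^{\<otimes>k} as matrices indexed by words w (length k, letters in 1..l);
the basis vector of word w is v_{w!0} \<otimes> ... \<otimes> v_{w!(k-1)}.\<close>
type_synonym 'a tmat = "nat list \<Rightarrow> nat list \<Rightarrow> 'a"

definition prim_root :: "nat \<Rightarrow> 'a::field \<Rightarrow> bool" where
  "prim_root n q \<longleftrightarrow> q ^ n = 1 \<and> (\<forall>m. 0 < m \<and> m < n \<longrightarrow> q ^ m \<noteq> 1)"

definition Dalpha :: "'a::field \<Rightarrow> nat \<Rightarrow> nat \<Rightarrow> 'a" where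
  "Dalpha q l i = (q ^ i - 1) * (1 - q powi (int i - int l)) / (q - 1)"

definition Vid :: "nat \<Rightarrow> 'a::field smat" where
  "Vid l = (\<lambda>i j. if i = j \<and> 1 \<le> j \<and> j \<le> l then 1 else 0)"

definition Va :: "nat \<Rightarrow> 'a::field smat" where
  "Va l = (\<lambda>i j. if 1 \<le> j \<and> j < l \<and> i = j + 1 then 1 else 0)"

definition Vb :: "'a::field \<Rightarrow> nat \<Rightarrow> int \<Rightarrow> 'a smat" where
  "Vb q l s = (\<lambda>i j. if i = j \<and> 1 \<le> j \<and> j \<le> l then q powi (s + int j - 1) else 0)"

definition Vc :: "'a::field \<Rightarrow> nat \<Rightarrow> int \<Rightarrow> 'a smat" where
  "Vc q l s = (\<lambda>i j. if i = j \<and> 1 \<le> j \<and> j \<le> l then q powi (int j - (s + int l)) else 0)"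

definition Vd :: "'a::field \<Rightarrow> nat \<Rightarrow> 'a smat" where
  "Vd q l = (\<lambda>i j. if 2 \<le> j \<and> j \<le> l \<and> i = j - 1 then Dalpha q l (j - 1) else 0)"

definition smul :: "nat \<Rightarrow> 'a::field smat \<Rightarrow> 'a smat \<Rightarrow> 'a smat" where
  "smul l A B = (\<lambda>i j. \<Sum>p\<in>{1..l}. A i p * B p j)"

definition spow :: "nat \<Rightarrow> 'a::field smat \<Rightarrow> nat \<Rightarrow> 'a smat" where
  "spow l A m = ((smul l A) ^^ m) (Vid l)"

definition qint :: "'a::field \<Rightarrow> nat \<Rightarrow> 'a" where
  "qint q m = (\<Sum>j<m. q ^ j)"

definition qfact :: "'a::field \<Rightarrow> nat \<Rightarrow> 'a" where
  "qfact q s = (\<Prod>m\<in>{1..s}. qint q m)"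

definition Rmat :: "'a::field \<Rightarrow> nat \<Rightarrow> nat \<Rightarrow> int \<Rightarrow> nat \<times> nat \<Rightarrow> nat \<times> nat \<Rightarrow> 'a" where
  "Rmat q n l r ii jj =
     (1 / of_nat n) * (\<Sum>m<n. \<Sum>s<n. \<Sum>t<n.
        q powi (- (int t * int m)) / qfact q s
        * smul l (spow l (Va l) s) (spow l (Vb q l r) t) (fst ii) (fst jj)
        * smul l (spow l (Vc q l r) m) (spow l (Vd q l) s) (snd ii) (snd jj))"

definition Rcheck :: "'a::field \<Rightarrow> nat \<Rightarrow> nat \<Rightarrow> int \<Rightarrow> nat \<times> nat \<Rightarrow> nat \<times> nat \<Rightarrow> 'a" where
  "Rcheck q n l r ii jj = Rmat q n l r (snd ii, fst ii) jj"

definition words :: "nat \<Rightarrow> nat \<Rightarrow> nat list set" where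
  "words l k = {w. length w = k \<and> set w \<subseteq> {1..l}}"

definition tmul :: "nat \<Rightarrow> nat \<Rightarrow> 'a::field tmat \<Rightarrow> 'a tmat \<Rightarrow> 'a tmat" where
  "tmul l k A B = (\<lambda>w u. \<Sum>v\<in>words l k. A w v * B v u)"

definition tid :: "'a::field tmat" where
  "tid = (\<lambda>w u. if w = u then 1 else 0)"

text \<open>Equality of operators on V^{\<otimes>k} (only entries indexed by actual basis words matter).\<close>
definition teq :: "nat \<Rightarrow> nat \<Rightarrow> 'a::field tmat \<Rightarrow> 'a tmat \<Rightarrow> bool" where
  "teq l k A B \<longleftrightarrow> (\<forall>w\<in>words l k. \<forall>u\<in>words l k. A w u = B w u)"

definition tensor :: "'a::field smat list \<Rightarrow> 'a tmat" where
  "tensor fs = (\<lambda>w u. \<Prod>p<length fs. (fs ! p) (w ! p) (u ! p))"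

text \<open>Rcheck_i acting on tensor slots i, i+1 (1-based), i.e. list positions i-1, i.\<close>
definition Rcheck_i :: "'a::field \<Rightarrow> nat \<Rightarrow> nat \<Rightarrow> int \<Rightarrow> nat \<Rightarrow> nat \<Rightarrow> 'a tmat" where
  "Rcheck_i q n l r k i = (\<lambda>w u.
     Rcheck q n l r (w ! (i - 1), w ! i) (u ! (i - 1), u ! i)
     * (\<Prod>p\<in>{..<k} - {i - 1, i}. if w ! p = u ! p then 1 else 0))"

text \<open>Action of the generators of D_n on V(l,s)^{\<otimes>k} via the iterated coproduct:
 Delta(a) = sum_j 1\<otimes>..\<otimes>1\<otimes>a\<otimes>b\<otimes>..\<otimes>b, Delta(d) = sum_j 1\<otimes>..\<otimes>1\<otimes>d\<otimes>c\<otimes>..\<otimes>c,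
 Delta(b) = b\<otimes>..\<otimes>b, Delta(c) = c\<otimes>..\<otimes>c.\<close>
definition Delta_a :: "'a::field \<Rightarrow> nat \<Rightarrow> int \<Rightarrow> nat \<Rightarrow> 'a tmat" where
  "Delta_a q l s k = (\<lambda>w u. \<Sum>j<k.
     tensor (replicate j (Vid l) @ [Va l] @ replicate (k - j - 1) (Vb q l s)) w u)"

definition Delta_d :: "'a::field \<Rightarrow> nat \<Rightarrow> int \<Rightarrow> nat \<Rightarrow> 'a tmat" where
  "Delta_d q l s k = (\<lambda>w u. \<Sum>j<k.
     tensor (replicate j (Vid l) @ [Vd q l] @ replicate (k - j - 1) (Vc q l s)) w u)"

definition Delta_b :: "'a::field \<Rightarrow> nat \<Rightarrow> int \<Rightarrow> nat \<Rightarrow> 'a tmat" where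
  "Delta_b q l s k = tensor (replicate k (Vb q l s))"

definition Delta_c :: "'a::field \<Rightarrow> nat \<Rightarrow> int \<Rightarrow> nat \<Rightarrow> 'a tmat" where
  "Delta_c q l s k = tensor (replicate k (Vc q l s))"

definition is_Dn_endo :: "'a::field \<Rightarrow> nat \<Rightarrow> int \<Rightarrow> nat \<Rightarrow> 'a tmat \<Rightarrow> bool" where
  "is_Dn_endo q l s k T \<longleftrightarrow>
     teq l k (tmul l k T (Delta_a q l s k)) (tmul l k (Delta_a q l s k) T) \<and>
     teq l k (tmul l k T (Delta_b q l s k)) (tmul l k (Delta_b q l s k) T) \<and>
     teq l k (tmul l k T (Delta_c q l s k)) (tmul l k (Delta_c q l s k) T) \<and>
     teq l k (tmul l k T (Delta_d q l s k)) (tmul l k (Delta_d q l s k) T)"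

definition hecke_img :: "'a::field \<Rightarrow> nat \<Rightarrow> int \<Rightarrow> nat \<Rightarrow> nat \<Rightarrow> 'a tmat" where
  "hecke_img q n r k i = (\<lambda>w u. inverse (q powi (- (r * (r + 1)))) * Rcheck_i q n 2 r k i w u)"

text \<open>The images T_1..T_{k-1} satisfy the defining relations of H_k(q) (so the assignment
s_i \<mapsto> T_i extends to an algebra homomorphism from the presented algebra H_k(q)) and lie in
End_{D_n}(V^{\<otimes>k}).\<close>
definition hecke_hom_exists :: "'a::field \<Rightarrow> nat \<Rightarrow> int \<Rightarrow> nat \<Rightarrow> bool" where
  "hecke_hom_exists q n r k \<longleftrightarrow>
    (let T = hecke_img q n r k in
     (\<forall>i j. 1 \<le> i \<and> i \<le> k - 1 \<and> 1 \<le> j \<and> j \<le> k - 1 \<and> (i + 1 < j \<or> j + 1 < i) \<longrightarrow>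
        teq 2 k (tmul 2 k (T i) (T j)) (tmul 2 k (T j) (T i))) \<and>
     (\<forall>i. 1 \<le> i \<and> i \<le> k - 2 \<longrightarrow>
        teq 2 k (tmul 2 k (tmul 2 k (T i) (T (i + 1))) (T i))
                (tmul 2 k (tmul 2 k (T (i + 1)) (T i)) (T (i + 1)))) \<and>
     (\<forall>i. 1 \<le> i \<and> i \<le> k - 1 \<longrightarrow>
        teq 2 k (tmul 2 k (\<lambda>w u. T i w u - tid w u) (\<lambda>w u. T i w u + inverse q * tid w u))
                (\<lambda>w u. 0)) \<and>
     (\<forall>i. 1 \<le> i \<and> i \<le> k - 1 \<longrightarrow> is_Dn_endo q 2 r k (T i)))"

end

theory Submission
  imports Defs
begin
lemma qpowi_mod:
  fixes q :: "'a::field"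
  assumes "q ^ n = 1" "n > 0"
  shows "q powi e = q powi (e mod int n)"
proof -
  have q0: "q \<noteq> 0" using assms by (auto simp: power_0_left)
  have "e = int n * (e div int n) + e mod int n" by simp
  then have "q powi e = q powi (int n * (e div int n)) * q powi (e mod int n)"
    by (metis power_int_add q0)
  also have "q powi (int n * (e div int n)) = 1"
    by (simp add: power_int_mult assms(1))
  finally show ?thesis by simp
qed

lemma prim_props:
  fixes q :: "'a::field"
  assumes "prim_root n q" "n \<ge> 2"
  shows "q ^ n = 1" "q \<noteq> 0" "q \<noteq> 1"
proof -
  show "q ^ n = 1" using assms unfolding prim_root_def by auto
  then show "q \<noteq> 0" using assms by (auto simp: power_0_left)
  have "q ^ 1 \<noteq> 1" using assms unfolding prim_root_def by auto
  then show "q \<noteq> 1" by simp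
qed

lemma qpowi_ne1:
  fixes q :: "'a::field"
  assumes "prim_root n q" "n \<ge> 2" "\<not> int n dvd e"
  shows "q powi e \<noteq> 1"
proof -
  have n: "q ^ n = 1" using prim_props assms by blast
  have "q powi e = q powi (e mod int n)" using qpowi_mod[OF n] assms by simp
  also have "\<dots> = q ^ nat (e mod int n)" using assms(2) by (simp add: power_int_nonneg_exp)
  finally have eq: "q powi e = q ^ nat (e mod int n)" .
  have m0: "e mod int n \<noteq> 0" using assms(3) by (simp add: dvd_eq_mod_eq_0)
  have m1: "e mod int n \<ge> 0" using assms(2) by simp
  have "0 < nat (e mod int n)" using m0 m1 by simp
  moreover have "nat (e mod int n) < n" using assms(2)
    by (simp add: nat_less_iff)
  ultimately show ?thesis using eq assms(1) unfolding prim_root_def by auto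
qed

lemma geo_char:
  fixes q :: "'a::field_char_0"
  assumes "prim_root n q" "n \<ge> 2"
  shows "(\<Sum>m<n. q powi (e * int m)) = (if int n dvd e then of_nat n else 0)"
proof -
  have n: "q ^ n = 1" and q0: "q \<noteq> 0" using prim_props assms by blast+
  have pw: "q powi (e * int m) = (q powi e) ^ m" for m by (simp add: power_int_power')
  show ?thesis
  proof (cases "int n dvd e")
    case True
    then obtain c where "e = int n * c" by blast
    then have "q powi e = 1" by (simp add: power_int_mult n)
    then show ?thesis using True by (simp add: pw)
  next
    case False
    have ne: "q powi e \<noteq> 1" using qpowi_ne1 assms False by blast
    have "(q powi e) ^ n = 1"
      by (simp add: power_int_power' mult.commute[of e] power_int_mult n)
    then show ?thesis using False ne by (simp add: pw geometric_sum)
  qed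
qed

lemma char2:
  fixes q :: "'a::field_char_0"
  assumes "prim_root n q" "n \<ge> 2"
  shows "(\<Sum>m<n. \<Sum>t<n. q powi (- (int t * int m)) * q powi (a * int t) * q powi (b * int m))
         = of_nat n * q powi (a * b)"
proof -
  have n: "q ^ n = 1" and q0: "q \<noteq> 0" using prim_props assms by blast+
  have e: "q powi (- (int t * int m)) * q powi (a * int t) * q powi (b * int m)
        = q powi (a * int t) * q powi ((b - int t) * int m)" for t m
    using q0 by (simp add: power_int_add[symmetric] algebra_simps)
  define t0 where "t0 = nat (b mod int n)"
  have t0n: "t0 < n" using assms(2) unfolding t0_def by (simp add: nat_less_iff)
  have P: "int n dvd (b - int t) \<longleftrightarrow> t = t0" if "t < n" for t
  proof -
    have "int n dvd (b - int t) \<longleftrightarrow> b mod int n = int t mod int n"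
      by (simp add: mod_eq_dvd_iff)
    also have "int t mod int n = int t" using that by simp
    also have "b mod int n = int t \<longleftrightarrow> t = t0" unfolding t0_def using assms(2)
      by (metis int_nat_eq nat_int pos_mod_sign of_nat_0_less_iff zero_less_numeral less_le_trans)
    finally show ?thesis .
  qed
  have "(\<Sum>m<n. \<Sum>t<n. q powi (- (int t * int m)) * q powi (a * int t) * q powi (b * int m))
      = (\<Sum>t<n. \<Sum>m<n. q powi (a * int t) * q powi ((b - int t) * int m))"
    unfolding e by (rule sum.swap)
  also have "\<dots> = (\<Sum>t<n. q powi (a * int t) * (if int n dvd (b - int t) then of_nat n else 0))"
    by (simp add: sum_distrib_left[symmetric] geo_char[OF assms])
  also have "\<dots> = (\<Sum>t<n. if t = t0 then q powi (a * int t) * of_nat n else 0)"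
    by (rule sum.cong) (auto simp: P)
  also have "\<dots> = q powi (a * int t0) * of_nat n" using t0n by simp
  also have "q powi (a * int t0) = q powi (a * b)"
  proof -
    have "int t0 = b mod int n" unfolding t0_def using assms(2) by simp
    then have "(a * int t0) mod int n = (a * b) mod int n" by (simp add: mod_mult_right_eq)
    then show ?thesis using qpowi_mod[OF n] assms(2) by (metis not_numeral_le_zero not_gr0)
  qed
  finally show ?thesis by simp
qed

lemma I2: "{1..2::nat} = {1,2}" by auto
lemma sum12: "(\<Sum>p\<in>{1..2::nat}. f p) = f 1 + f 2" unfolding I2 by simp

definition sdiag :: "nat \<Rightarrow> (nat \<Rightarrow> 'a::field) \<Rightarrow> 'a smat" where
  "sdiag l f = (\<lambda>i j. if i = j \<and> 1 \<le> j \<and> j \<le> l then f j else 0)"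

lemma smul_diag: "smul l (sdiag l f) (sdiag l g) = sdiag l (\<lambda>j. f j * g j)"
proof (rule ext, rule ext)
  fix i j
  show "smul l (sdiag l f) (sdiag l g) i j = sdiag l (\<lambda>j. f j * g j) i j"
    unfolding smul_def sdiag_def
    by (cases "i = j \<and> 1 \<le> j \<and> j \<le> l") (auto intro: sum.neutral simp: if_distrib cong: if_cong)
qed

lemma Vid_diag: "Vid l = sdiag l (\<lambda>j. 1)" unfolding Vid_def sdiag_def by simp

lemma spow_diag: "spow l (sdiag l f) t = sdiag l (\<lambda>j. f j ^ t)"
proof (induction t)
  case 0 then show ?case unfolding spow_def by (simp add: Vid_diag)
next
  case (Suc t)
  have "spow l (sdiag l f) (Suc t) = smul l (sdiag l f) (spow l (sdiag l f) t)"
    unfolding spow_def by simp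
  then show ?case using Suc by (simp add: smul_diag)
qed

lemma Vb_diag: "Vb q l s = sdiag l (\<lambda>j. q powi (s + int j - 1))"
  unfolding Vb_def sdiag_def by simp
lemma Vc_diag: "Vc q l s = sdiag l (\<lambda>j. q powi (int j - (s + int l)))"
  unfolding Vc_def sdiag_def by simp

lemma spow_Vb: "spow l (Vb q l s) t = sdiag l (\<lambda>j. q powi ((s + int j - 1) * int t))"
  by (simp add: Vb_diag spow_diag power_int_power')
lemma spow_Vc: "spow l (Vc q l s) t = sdiag l (\<lambda>j. q powi ((int j - (s + int l)) * int t))"
  by (simp add: Vc_diag spow_diag power_int_power')

lemma spow0: "spow l A 0 = Vid l" unfolding spow_def by simp
lemma spow1: "spow l A 1 = smul l A (Vid l)" unfolding spow_def by simp

lemma Va_1: "spow 2 (Va 2) 1 = (Va 2 :: 'a::field smat)"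
  unfolding spow1 smul_def sum12 by (auto simp: Va_def Vid_def intro!: ext)

lemma Va_nil: "spow 2 (Va 2) (Suc (Suc s)) = (\<lambda>i j. 0 :: 'a::field)"
proof (induction s)
  case 0
  have e: "spow 2 (Va 2 :: 'a smat) (Suc (Suc 0)) = smul 2 (Va 2) (spow 2 (Va 2) 1)" unfolding spow_def by simp
  have "smul 2 (Va 2 :: 'a smat) (spow 2 (Va 2) 1) = (\<lambda>i j. 0)"
    unfolding Va_1 smul_def sum12 by (auto simp: Va_def intro!: ext)
  then show ?case using e by simp
next
  case (Suc s)
  have "spow 2 (Va 2 :: 'a smat) (Suc (Suc (Suc s))) = smul 2 (Va 2) (spow 2 (Va 2) (Suc (Suc s)))" unfolding spow_def by simp
  then show ?case using Suc by (simp add: smul_def)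
qed

lemma Vd_1: "spow 2 (Vd q 2) 1 = (Vd q 2 :: 'a::field smat)"
  unfolding spow1 smul_def sum12 by (auto simp: Vd_def Vid_def intro!: ext)

lemma Vd_nil: "spow 2 (Vd q 2) (Suc (Suc s)) = (\<lambda>i j. 0 :: 'a::field)"
proof (induction s)
  case 0
  have e: "spow 2 (Vd q 2 :: 'a smat) (Suc (Suc 0)) = smul 2 (Vd q 2) (spow 2 (Vd q 2) 1)" unfolding spow_def by simp
  have "smul 2 (Vd q 2 :: 'a smat) (spow 2 (Vd q 2) 1) = (\<lambda>i j. 0)"
    unfolding Vd_1 smul_def sum12 by (auto simp: Vd_def intro!: ext)
  then show ?case using e by simp
next
  case (Suc s)
  have "spow 2 (Vd q 2) (Suc (Suc (Suc s))) = smul 2 (Vd q 2) (spow 2 (Vd q 2) (Suc (Suc s)))" unfolding spow_def by simp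
  then show ?case using Suc by (simp add: smul_def)
qed

lemma sdiag_at: "i \<in> {1,2} \<Longrightarrow> j \<in> {1,2} \<Longrightarrow> sdiag 2 f i j = (if i = j then f i else 0)"
  unfolding sdiag_def by auto

lemma smulA: "smul 2 (Va 2) (sdiag 2 f) i j = (if i = 2 \<and> j = 1 then f 1 else 0)"
  unfolding smul_def sum12 by (auto simp: Va_def sdiag_def)

lemma smulD: "smul 2 (sdiag 2 g) (Vd q 2) i j = (if i = 1 \<and> j = 2 then g 1 * Dalpha q 2 1 else 0)"
  unfolding smul_def sum12 by (auto simp: Vd_def sdiag_def)

lemma Rmat_val:
  fixes q :: "'a::field_char_0"
  assumes pr: "prim_root n q" and n2: "n \<ge> 2"
    and i1: "i1 \<in> {1,2}" and i2: "i2 \<in> {1,2}" and j1: "j1 \<in> {1,2}" and j2: "j2 \<in> {1,2}"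
  shows "Rmat q n 2 r (i1,i2) (j1,j2) =
     (if i1 = j1 \<and> i2 = j2 then q powi ((r + int i1 - 1) * (int i2 - (r + 2))) else 0)
   + (if i1 = 2 \<and> j1 = 1 \<and> i2 = 1 \<and> j2 = 2 then Dalpha q 2 1 * q powi (r * (1 - (r + 2))) else 0)"
proof -
  define F where "F m s t = q powi (- (int t * int m)) / qfact q s
        * smul 2 (spow 2 (Va 2) s) (spow 2 (Vb q 2 r) t) i1 j1
        * smul 2 (spow 2 (Vc q 2 r) m) (spow 2 (Vd q 2) s) i2 j2" for m s t
  define G where "G s = (\<Sum>m<n. \<Sum>t<n. F m s t)" for s
  have R: "Rmat q n 2 r (i1,i2) (j1,j2) = 1 / of_nat n * (\<Sum>s<n. G s)"
  proof -
    have "Rmat q n 2 r (i1,i2) (j1,j2) = 1 / of_nat n * (\<Sum>m<n. \<Sum>s<n. \<Sum>t<n. F m s t)"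
      unfolding Rmat_def F_def by simp
    also have "(\<Sum>m<n. \<Sum>s<n. \<Sum>t<n. F m s t) = (\<Sum>s<n. G s)"
      unfolding G_def by (rule sum.swap)
    finally show ?thesis .
  qed
  have Gz: "G s = 0" if "s \<ge> 2" for s
  proof -
    have "s = Suc (Suc (s - 2))" using that by arith
    then have "spow 2 (Va 2 :: 'a smat) s = (\<lambda>i j. 0)" using Va_nil[of "s - 2"] by simp
    then show ?thesis unfolding G_def F_def by (simp add: smul_def)
  qed
  have "(\<Sum>s<n. G s) = (\<Sum>s\<in>{0,1}. G s)"
    by (rule sum.mono_neutral_right) (use n2 Gz in auto)
  then have S: "(\<Sum>s<n. G s) = G 0 + G 1" by simp
  have nz: "(of_nat n :: 'a) \<noteq> 0" using n2 by simp
  have G0: "G 0 = (if i1 = j1 \<and> i2 = j2 then of_nat n * q powi ((r + int i1 - 1) * (int i2 - (r + 2))) else 0)"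
  proof (cases "i1 = j1 \<and> i2 = j2")
    case True
    have "F m 0 t = q powi (- (int t * int m)) * q powi ((r + int i1 - 1) * int t) * q powi ((int i2 - (r + 2)) * int m)" for m t
      unfolding F_def spow0 Vid_diag spow_Vb spow_Vc smul_diag using True i1 i2
      by (simp add: sdiag_at qfact_def)
    then show ?thesis using True unfolding G_def by (simp add: char2[OF pr n2])
  next
    case False
    have "F m 0 t = 0" for m t
      unfolding F_def spow0 Vid_diag spow_Vb spow_Vc smul_diag using False i1 i2 j1 j2
      by (auto simp: sdiag_at)
    then have "G 0 = 0" unfolding G_def by simp
    then show ?thesis using False by auto
  qed
  have G1: "G 1 = (if i1 = 2 \<and> j1 = 1 \<and> i2 = 1 \<and> j2 = 2 then of_nat n * (Dalpha q 2 1 * q powi (r * (1 - (r + 2)))) else 0)"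
  proof (cases "i1 = 2 \<and> j1 = 1 \<and> i2 = 1 \<and> j2 = 2")
    case True
    have "F m 1 t = Dalpha q 2 1 * (q powi (- (int t * int m)) * q powi (r * int t) * q powi ((1 - (r + 2)) * int m))" for m t
      unfolding F_def Va_1 Vd_1 spow_Vb spow_Vc smulA smulD using True
      by (simp add: qfact_def qint_def)
    then show ?thesis using True unfolding G_def by (simp add: char2[OF pr n2] sum_distrib_left[symmetric])
  next
    case False
    have "F m 1 t = 0" for m t
      unfolding F_def Va_1 Vd_1 spow_Vb spow_Vc smulA smulD using False
      by auto
    then have "G 1 = 0" unfolding G_def by simp
    then show ?thesis using False by auto
  qed
  have gen: "1 / of_nat n * ((if c1 then of_nat n * X else 0) + (if c2 then of_nat n * Y else 0))
     = (if c1 then X else 0) + (if c2 then Y else (0::'a))" for c1 c2 X Y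
    using nz by (cases c1; cases c2) (simp_all add: distrib_left)
  show ?thesis unfolding R S G0 G1 gen ..
qed

definition Tl :: "'a::field \<Rightarrow> int \<Rightarrow> nat \<times> nat \<Rightarrow> nat \<times> nat \<Rightarrow> 'a" where
  "Tl q r ab cd = (let (a,b) = ab; (c,d) = cd in
     if a = c \<and> b = d \<and> a = b then 1
     else if a = 1 \<and> b = 2 \<and> c = 1 \<and> d = 2 then 1 - inverse q
     else if a = 2 \<and> b = 1 \<and> c = 1 \<and> d = 2 then q powi r
     else if a = 1 \<and> b = 2 \<and> c = 2 \<and> d = 1 then q powi (- r - 1)
     else 0)"

lemma Dalpha21: "q \<noteq> 1 \<Longrightarrow> Dalpha q 2 1 = 1 - inverse (q::'a::field)"
  unfolding Dalpha_def by (simp add: power_int_minus)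

lemma Rcheck_val:
  fixes q :: "'a::field_char_0"
  assumes pr: "prim_root n q" and n2: "n \<ge> 2"
    and a: "a \<in> {1,2}" and b: "b \<in> {1,2}" and c: "c \<in> {1,2}" and d: "d \<in> {1,2}"
  shows "Rcheck q n 2 r (a,b) (c,d) = q powi (- (r * (r + 1))) * Tl q r (a,b) (c,d)"
proof -
  have q0: "q \<noteq> 0" and q1: "q \<noteq> 1" using prim_props[OF pr n2] by auto
  have f1: "q powi (r * (- 1 - r)) = q powi - (r * (r + 1))" by (simp add: algebra_simps)
  have f5: "q powi - ((1 + r) * r) = q powi - (r * (r + 1))" by (simp add: algebra_simps)
  have x3: "(1 + r) * (- 1 - r) = - (r * (r + 1)) + (- r - 1)" by algebra
  have f3: "q powi ((1 + r) * (- 1 - r)) = q powi - (r * (r + 1)) * q powi (- r - 1)"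
    unfolding x3 by (rule power_int_add) (use q0 in simp)
  have x4: "- (r * r) = - (r * (r + 1)) + r" by algebra
  have f4: "q powi - (r * r) = q powi - (r * (r + 1)) * q powi r"
    unfolding x4 by (rule power_int_add) (use q0 in simp)
  have f2: "Dalpha q 2 (Suc 0) * q powi (r * (- 1 - r)) = q powi - (r * (r + 1)) * (1 - inverse q)"
    using Dalpha21[OF q1] f1 by simp
  have R: "Rcheck q n 2 r (a,b) (c,d) =
     (if b = c \<and> a = d then q powi ((r + int b - 1) * (int a - (r + 2))) else 0)
   + (if b = 2 \<and> c = 1 \<and> a = 1 \<and> d = 2 then Dalpha q 2 1 * q powi (r * (1 - (r + 2))) else 0)"
    unfolding Rcheck_def prod.sel by (rule Rmat_val[OF pr n2 b a c d])
  show ?thesis unfolding R using a b c d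
    apply (elim insertE emptyE)
    apply (simp_all only: Tl_def Let_def prod.case)
    apply simp_all
    using f1 f2 f3 f4 f5 by simp_all
qed

definition agree2 :: "nat \<Rightarrow> nat list \<Rightarrow> nat list \<Rightarrow> bool" where
  "agree2 p w u \<longleftrightarrow> (\<forall>j<length w. j \<noteq> p \<and> j \<noteq> Suc p \<longrightarrow> w ! j = u ! j)"

definition loc :: "nat \<Rightarrow> (nat \<times> nat \<Rightarrow> nat \<times> nat \<Rightarrow> 'a::field) \<Rightarrow> 'a tmat" where
  "loc p M w u = (if agree2 p w u then M (w ! p, w ! Suc p) (u ! p, u ! Suc p) else 0)"

lemma words_len: "w \<in> words l k \<Longrightarrow> length w = k" unfolding words_def by auto
lemma words_nth: "w \<in> words 2 k \<Longrightarrow> j < k \<Longrightarrow> w ! j \<in> {1,2}"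
  unfolding words_def by (auto dest!: nth_mem)
lemma words_upd: "w \<in> words 2 k \<Longrightarrow> x \<in> {1,2} \<Longrightarrow> w[p := x] \<in> words 2 k"
  unfolding words_def using set_update_subset_insert[of w p x] by auto
lemma finite_words: "finite (words l k)"
proof -
  have "words l k \<subseteq> {w. set w \<subseteq> {1..l} \<and> length w = k}" unfolding words_def by auto
  then show ?thesis using finite_lists_length_eq[of "{1..l}" k] by (auto intro: finite_subset)
qed

lemma prod_ind: "finite S \<Longrightarrow> (\<Prod>x\<in>S. if P x then (1::'a::comm_semiring_1) else 0) = (if \<forall>x\<in>S. P x then 1 else 0)"
  by (induction S rule: finite_induct) auto

lemma upd_in:
  assumes "w \<in> words 2 k" "v \<in> words 2 k" "agree2 p w v" "Suc p < k"
  shows "v = w[p := v ! p, Suc p := v ! Suc p]"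
proof (rule nth_equalityI)
  show "length v = length (w[p := v ! p, Suc p := v ! Suc p])" using assms words_len by simp
  fix j assume "j < length v"
  then have j: "j < length w" using assms words_len by simp
  then show "v ! j = w[p := v ! p, Suc p := v ! Suc p] ! j"
    using assms(3) unfolding agree2_def
    by (cases "j = p"; cases "j = Suc p") (auto simp: nth_list_update)
qed

lemma sum_upd:
  assumes "Suc p < k" "w \<in> words 2 k"
    and Z: "\<And>v. v \<in> words 2 k \<Longrightarrow> \<not> agree2 p w v \<Longrightarrow> f v = 0"
  shows "(\<Sum>v\<in>words 2 k. f v) = (\<Sum>x\<in>{1,2}. \<Sum>y\<in>{1,2::nat}. f (w[p := x, Suc p := y]))"
proof -
  define g where "g = (\<lambda>(x,y). w[p := x, Suc p := y])"
  have len: "length w = k" using assms words_len by blast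
  have S: "g ` ({1,2} \<times> {1,2}) \<subseteq> words 2 k"
  proof
    fix v assume "v \<in> g ` ({1,2} \<times> {1,2})"
    then obtain x y where xy: "x \<in> {1,2}" "y \<in> {1,2}" "v = g (x,y)" by blast
    show "v \<in> words 2 k" unfolding xy(3) g_def using xy(1,2) assms(2)
      by (simp add: words_upd)
  qed
  have gp: "g (x,y) ! p = x" "g (x,y) ! Suc p = y" for x y
    using len assms(1) by (auto simp: g_def nth_list_update)
  have inj: "inj_on g ({1,2} \<times> {1,2})"
  proof (rule inj_onI)
    fix a b assume "g a = g b"
    then have "g a ! p = g b ! p" "g a ! Suc p = g b ! Suc p" by auto
    then show "a = b" by (cases a; cases b) (simp add: gp)
  qed
  have "(\<Sum>v\<in>words 2 k. f v) = (\<Sum>v\<in>g ` ({1,2} \<times> {1,2}). f v)"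
  proof (rule sum.mono_neutral_right[OF finite_words S])
    show "\<forall>v\<in>words 2 k - g ` ({1, 2} \<times> {1, 2}). f v = 0"
    proof
      fix v assume v: "v \<in> words 2 k - g ` ({1, 2} \<times> {1, 2})"
      show "f v = 0"
      proof (rule Z)
        show "v \<in> words 2 k" using v by auto
        show "\<not> agree2 p w v"
        proof
          assume "agree2 p w v"
          then have "v = g (v ! p, v ! Suc p)" unfolding g_def using upd_in assms v by auto
          moreover have "(v ! p, v ! Suc p) \<in> {1,2} \<times> {1,2}"
            using words_nth[of v k p] words_nth[of v k "Suc p"] v assms(1) by auto
          ultimately show False using v by blast
        qed
      qed
    qed
  qed
  also have "\<dots> = (\<Sum>xy\<in>{1,2} \<times> {1,2}. f (g xy))" by (rule sum.reindex[OF inj, unfolded comp_def])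
  also have "\<dots> = (\<Sum>x\<in>{1,2}. \<Sum>y\<in>{1,2::nat}. f (w[p := x, Suc p := y]))"
    unfolding g_def by (simp add: sum.cartesian_product add.assoc)
  finally show ?thesis .
qed

lemma agree2_upd: "Suc p < length w \<Longrightarrow> agree2 p w (w[p := x, Suc p := y])"
  unfolding agree2_def by auto

lemma agree2_sym: "length w = length u \<Longrightarrow> agree2 p w u = agree2 p u w"
  unfolding agree2_def by auto

lemma tmul_loc_left:
  assumes p: "Suc p < k" and w: "w \<in> words 2 k" and u: "u \<in> words 2 k"
    and A: "\<And>w u. w \<in> words 2 k \<Longrightarrow> u \<in> words 2 k \<Longrightarrow> A w u = loc p M w u"
  shows "tmul 2 k A B w u = (\<Sum>x\<in>{1,2}. \<Sum>y\<in>{1,2}. M (w ! p, w ! Suc p) (x,y) * B (w[p := x, Suc p := y]) u)"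
proof -
  have len: "length w = k" using w words_len by blast
  have "tmul 2 k A B w u = (\<Sum>v\<in>words 2 k. loc p M w v * B v u)"
    unfolding tmul_def using A w by (auto intro: sum.cong)
  also have "\<dots> = (\<Sum>x\<in>{1,2}. \<Sum>y\<in>{1,2}. loc p M w (w[p := x, Suc p := y]) * B (w[p := x, Suc p := y]) u)"
    by (rule sum_upd[OF p w]) (simp add: loc_def)
  also have "\<dots> = (\<Sum>x\<in>{1,2}. \<Sum>y\<in>{1,2}. M (w ! p, w ! Suc p) (x,y) * B (w[p := x, Suc p := y]) u)"
    using p len by (simp add: loc_def agree2_upd nth_list_update)
  finally show ?thesis .
qed

lemma tmul_loc_right:
  assumes p: "Suc p < k" and w: "w \<in> words 2 k" and u: "u \<in> words 2 k"
    and A: "\<And>w u. w \<in> words 2 k \<Longrightarrow> u \<in> words 2 k \<Longrightarrow> A w u = loc p M w u"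
  shows "tmul 2 k B A w u = (\<Sum>x\<in>{1,2}. \<Sum>y\<in>{1,2}. B w (u[p := x, Suc p := y]) * M (x,y) (u ! p, u ! Suc p))"
proof -
  have len: "length u = k" using u words_len by blast
  have "tmul 2 k B A w u = (\<Sum>v\<in>words 2 k. B w v * loc p M v u)"
    unfolding tmul_def using A u by (auto intro: sum.cong)
  also have "\<dots> = (\<Sum>x\<in>{1,2}. \<Sum>y\<in>{1,2}. B w (u[p := x, Suc p := y]) * loc p M (u[p := x, Suc p := y]) u)"
    by (rule sum_upd[OF p u]) (use u in \<open>auto simp: loc_def agree2_sym words_len\<close>)
  also have "\<dots> = (\<Sum>x\<in>{1,2}. \<Sum>y\<in>{1,2}. B w (u[p := x, Suc p := y]) * M (x,y) (u ! p, u ! Suc p))"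
    using p len by (simp add: loc_def agree2_upd agree2_sym nth_list_update)
  finally show ?thesis .
qed

lemma hecke_loc:
  fixes q :: "'a::field_char_0"
  assumes pr: "prim_root n q" and n2: "n \<ge> 2" and i: "1 \<le> i" "i < k"
    and w: "w \<in> words 2 k" and u: "u \<in> words 2 k"
  shows "hecke_img q n r k i w u = loc (i - 1) (Tl q r) w u"
proof -
  have q0: "q \<noteq> 0" using prim_props[OF pr n2] by auto
  have lw: "length w = k" and lu: "length u = k" using w u words_len by auto
  have si: "Suc (i - 1) = i" using i by simp
  have P: "(\<Prod>p\<in>{..<k} - {i - 1, i}. if w ! p = u ! p then 1 else (0::'a)) = (if agree2 (i - 1) w u then 1 else 0)"
    using i by (subst prod_ind) (auto simp: agree2_def lw)
  have R: "Rcheck q n 2 r (w ! (i - 1), w ! i) (u ! (i - 1), u ! i) = q powi (- (r * (r + 1))) * Tl q r (w ! (i - 1), w ! i) (u ! (i - 1), u ! i)"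
    by (rule Rcheck_val[OF pr n2]) (use i w u words_nth in auto)
  show ?thesis unfolding hecke_img_def Rcheck_i_def P R loc_def si using q0 by simp
qed

definition L2 :: "(nat \<times> nat \<Rightarrow> nat \<times> nat \<Rightarrow> 'a::field) \<Rightarrow> 'a smat \<Rightarrow> 'a smat \<Rightarrow> nat \<Rightarrow> nat \<Rightarrow> nat \<Rightarrow> nat \<Rightarrow> 'a" where
  "L2 M X Y a b c d = (\<Sum>x\<in>{1,2}. \<Sum>y\<in>{1,2}. M (a,b) (x,y) * X x c * Y y d)"
definition R2 :: "(nat \<times> nat \<Rightarrow> nat \<times> nat \<Rightarrow> 'a::field) \<Rightarrow> 'a smat \<Rightarrow> 'a smat \<Rightarrow> nat \<Rightarrow> nat \<Rightarrow> nat \<Rightarrow> nat \<Rightarrow> 'a" where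
  "R2 M X Y a b c d = (\<Sum>x\<in>{1,2}. \<Sum>y\<in>{1,2}. X a x * Y b y * M (x,y) (c,d))"

lemma pw_simps:
  fixes q :: "'a::field"
  assumes "q \<noteq> 0"
  shows "q powi (r + 1) = q powi r * q" "q powi (- r - 1) = inverse (q powi r) * inverse q"
    "q powi (- r) = inverse (q powi r)" "q powi (-1 - r) = inverse (q powi r) * inverse q"
    "q powi (1 + r) = q powi r * q"
  using assms
  by (auto simp: power_int_add power_int_diff power_int_minus field_simps)

lemma ab4: "a \<in> {1,2::nat} \<Longrightarrow> b \<in> {1,2::nat} \<Longrightarrow> c \<in> {1,2::nat} \<Longrightarrow> d \<in> {1,2::nat} \<Longrightarrow> P a b c d \<Longrightarrow> P a b c d" .

lemma comm_b:
  fixes q :: "'a::field"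
  assumes q0: "q \<noteq> 0" and abcd: "a \<in> {1,2}" "b \<in> {1,2}" "c \<in> {1,2}" "d \<in> {1,2}"
  shows "L2 (Tl q r) (Vb q 2 r) (Vb q 2 r) a b c d = R2 (Tl q r) (Vb q 2 r) (Vb q 2 r) a b c d"
  using abcd unfolding L2_def R2_def
  apply (elim insertE emptyE)
  apply (simp_all only: Tl_def Let_def prod.case)
  apply (simp_all add: Vb_def)
  done

lemma comm_c:
  fixes q :: "'a::field"
  assumes q0: "q \<noteq> 0" and abcd: "a \<in> {1,2}" "b \<in> {1,2}" "c \<in> {1,2}" "d \<in> {1,2}"
  shows "L2 (Tl q r) (Vc q 2 r) (Vc q 2 r) a b c d = R2 (Tl q r) (Vc q 2 r) (Vc q 2 r) a b c d"
  using abcd unfolding L2_def R2_def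
  apply (elim insertE emptyE)
  apply (simp_all only: Tl_def Let_def prod.case)
  apply (simp_all add: Vc_def)
  done

lemma comm_id:
  fixes q :: "'a::field"
  assumes abcd: "a \<in> {1,2}" "b \<in> {1,2}" "c \<in> {1,2}" "d \<in> {1,2}"
  shows "L2 (Tl q r) (Vid 2) (Vid 2) a b c d = R2 (Tl q r) (Vid 2) (Vid 2) a b c d"
  using abcd unfolding L2_def R2_def
  apply (elim insertE emptyE)
  apply (simp_all only: Tl_def Let_def prod.case)
  apply (simp_all add: Vid_def)
  done

lemma comm_a:
  fixes q :: "'a::field"
  assumes q0: "q \<noteq> 0" and abcd: "a \<in> {1,2}" "b \<in> {1,2}" "c \<in> {1,2}" "d \<in> {1,2}"
  shows "L2 (Tl q r) (Va 2) (Vb q 2 r) a b c d + L2 (Tl q r) (Vid 2) (Va 2) a b c d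
       = R2 (Tl q r) (Va 2) (Vb q 2 r) a b c d + R2 (Tl q r) (Vid 2) (Va 2) a b c d"
  using abcd unfolding L2_def R2_def
  apply (elim insertE emptyE)
  apply (simp_all only: Tl_def Let_def prod.case)
  apply (simp_all add: Vb_def Va_def Vid_def)
  using q0 by (simp_all add: pw_simps[OF q0] field_simps)

lemma comm_d:
  fixes q :: "'a::field"
  assumes q0: "q \<noteq> 0" and q1: "q \<noteq> 1" and abcd: "a \<in> {1,2}" "b \<in> {1,2}" "c \<in> {1,2}" "d \<in> {1,2}"
  shows "L2 (Tl q r) (Vd q 2) (Vc q 2 r) a b c d + L2 (Tl q r) (Vid 2) (Vd q 2) a b c d
       = R2 (Tl q r) (Vd q 2) (Vc q 2 r) a b c d + R2 (Tl q r) (Vid 2) (Vd q 2) a b c d"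
  using abcd unfolding L2_def R2_def
  apply (elim insertE emptyE)
  apply (simp_all only: Tl_def Let_def prod.case)
  apply (simp_all add: Vc_def Vd_def Vid_def)
  using q0 Dalpha21[OF q1] by (simp_all add: pw_simps[OF q0] field_simps)

definition Id2 :: "nat \<times> nat \<Rightarrow> nat \<times> nat \<Rightarrow> 'a::field" where
  "Id2 ab cd = (if ab = cd then 1 else 0)"

lemma tid_loc:
  assumes "w \<in> words 2 k" "u \<in> words 2 k" "Suc p < k"
  shows "tid w u = loc p Id2 w u"
proof -
  have "w = u \<longleftrightarrow> agree2 p w u \<and> w ! p = u ! p \<and> w ! Suc p = u ! Suc p"
  proof
    assume h: "agree2 p w u \<and> w ! p = u ! p \<and> w ! Suc p = u ! Suc p"
    show "w = u"
    proof (rule nth_equalityI)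
      show "length w = length u" using assms words_len by metis
      fix j assume "j < length w"
      then show "w ! j = u ! j" using h unfolding agree2_def by (cases "j = p \<or> j = Suc p") auto
    qed
  qed (simp add: agree2_def)
  then show ?thesis unfolding tid_def loc_def Id2_def by auto
qed

lemma agree2_upd_eq: "Suc p < length w \<Longrightarrow> agree2 p (w[p := x, Suc p := y]) u = agree2 p w u"
  unfolding agree2_def by (auto simp: nth_list_update)

lemma tmul_loc_loc:
  assumes p: "Suc p < k" and w: "w \<in> words 2 k" and u: "u \<in> words 2 k"
    and A: "\<And>w u. w \<in> words 2 k \<Longrightarrow> u \<in> words 2 k \<Longrightarrow> A w u = loc p M w u"
    and B: "\<And>w u. w \<in> words 2 k \<Longrightarrow> u \<in> words 2 k \<Longrightarrow> B w u = loc p N w u"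
  shows "tmul 2 k A B w u = (if agree2 p w u then
     (\<Sum>x\<in>{1,2}. \<Sum>y\<in>{1,2}. M (w ! p, w ! Suc p) (x,y) * N (x,y) (u ! p, u ! Suc p)) else 0)"
proof -
  have len: "length w = k" using w words_len by blast
  have Bx: "B (w[p := x, Suc p := y]) u = (if agree2 p w u then N (x,y) (u ! p, u ! Suc p) else 0)"
    if "x \<in> {1,2}" "y \<in> {1,2}" for x y
  proof -
    have "w[p := x, Suc p := y] \<in> words 2 k" using that w by (simp add: words_upd)
    then show ?thesis using B[OF _ u] p len by (simp add: loc_def agree2_upd_eq nth_list_update)
  qed
  have "tmul 2 k A B w u = (\<Sum>x\<in>{1,2}. \<Sum>y\<in>{1,2}. M (w ! p, w ! Suc p) (x,y) * B (w[p := x, Suc p := y]) u)"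
    by (rule tmul_loc_left[OF p w u A])
  also have "\<dots> = (\<Sum>x\<in>{1,2}. \<Sum>y\<in>{1,2}. M (w ! p, w ! Suc p) (x,y) * (if agree2 p w u then N (x,y) (u ! p, u ! Suc p) else 0))"
    by (intro sum.cong refl) (simp add: Bx)
  also have "\<dots> = (if agree2 p w u then
     (\<Sum>x\<in>{1,2}. \<Sum>y\<in>{1,2}. M (w ! p, w ! Suc p) (x,y) * N (x,y) (u ! p, u ! Suc p)) else 0)"
    by (cases "agree2 p w u") simp_all
  finally show ?thesis .
qed

lemma hecke_quad2:
  fixes q :: "'a::field"
  assumes q0: "q \<noteq> 0" and abcd: "a \<in> {1,2}" "b \<in> {1,2}" "c \<in> {1,2}" "d \<in> {1,2}"
  shows "(\<Sum>x\<in>{1,2}. \<Sum>y\<in>{1,2}. (Tl q r (a,b) (x,y) - Id2 (a,b) (x,y)) * (Tl q r (x,y) (c,d) + inverse q * Id2 (x,y) (c,d))) = 0"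
  using abcd
  apply (elim insertE emptyE)
  apply (simp_all only: Tl_def Let_def prod.case)
  apply (simp_all add: Id2_def)
  using q0 by (simp_all add: pw_simps[OF q0] field_simps)

lemma braid3:
  fixes q :: "'a::field"
  assumes q0: "q \<noteq> 0" and abcd: "a1 \<in> {1,2}" "a2 \<in> {1,2}" "a3 \<in> {1,2}" "c1 \<in> {1,2}" "c2 \<in> {1,2}" "c3 \<in> {1,2}"
  shows "(\<Sum>x\<in>{1,2}. \<Sum>y\<in>{1,2}. \<Sum>z\<in>{1,2}. Tl q r (a1,a2) (x,z) * Tl q r (z,a3) (y,c3) * Tl q r (x,y) (c1,c2))
       = (\<Sum>x\<in>{1,2}. \<Sum>y\<in>{1,2}. \<Sum>z\<in>{1,2}. Tl q r (a2,a3) (z,y) * Tl q r (a1,z) (c1,x) * Tl q r (x,y) (c2,c3))"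
  using abcd
  apply (elim insertE emptyE)
  apply (simp_all only: Tl_def Let_def prod.case)
  apply (simp_all)
  using q0 by (simp_all add: pw_simps[OF q0] field_simps)

definition agree3 :: "nat \<Rightarrow> nat list \<Rightarrow> nat list \<Rightarrow> bool" where
  "agree3 p w u \<longleftrightarrow> (\<forall>j<length w. j \<noteq> p \<and> j \<noteq> Suc p \<and> j \<noteq> Suc (Suc p) \<longrightarrow> w ! j = u ! j)"

lemma ag_b1:
  assumes "Suc (Suc p) < length w" "length u = length w"
  shows "agree2 (Suc p) (w[p := x', Suc p := y']) (u[p := x, Suc p := y]) \<longleftrightarrow> (x' = x \<and> agree3 p w u)"
proof
  assume h: "agree2 (Suc p) (w[p := x', Suc p := y']) (u[p := x, Suc p := y])"
  have "x' = x" using h[unfolded agree2_def, rule_format, of p] assms by simp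
  moreover have "agree3 p w u" unfolding agree3_def
  proof (intro allI impI)
    fix j assume j: "j < length w" "j \<noteq> p \<and> j \<noteq> Suc p \<and> j \<noteq> Suc (Suc p)"
    then show "w ! j = u ! j" using h[unfolded agree2_def, rule_format, of j] assms by simp
  qed
  ultimately show "x' = x \<and> agree3 p w u" by simp
next
  assume h: "x' = x \<and> agree3 p w u"
  show "agree2 (Suc p) (w[p := x', Suc p := y']) (u[p := x, Suc p := y])" unfolding agree2_def
  proof (intro allI impI)
    fix j assume j: "j < length (w[p := x', Suc p := y'])" "j \<noteq> Suc p \<and> j \<noteq> Suc (Suc p)"
    show "w[p := x', Suc p := y'] ! j = u[p := x, Suc p := y] ! j"
    proof (cases "j = p")
      case True then show ?thesis using h assms by simp
    next
      case False then show ?thesis using h j assms unfolding agree3_def by (simp add: nth_list_update)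
    qed
  qed
qed

lemma ag_b2:
  assumes "Suc (Suc p) < length w" "length u = length w"
  shows "agree2 p (w[Suc p := x', Suc (Suc p) := y']) (u[Suc p := x, Suc (Suc p) := y]) \<longleftrightarrow> (y' = y \<and> agree3 p w u)"
proof
  assume h: "agree2 p (w[Suc p := x', Suc (Suc p) := y']) (u[Suc p := x, Suc (Suc p) := y])"
  have "y' = y" using h[unfolded agree2_def, rule_format, of "Suc (Suc p)"] assms by simp
  moreover have "agree3 p w u" unfolding agree3_def
  proof (intro allI impI)
    fix j assume j: "j < length w" "j \<noteq> p \<and> j \<noteq> Suc p \<and> j \<noteq> Suc (Suc p)"
    then show "w ! j = u ! j" using h[unfolded agree2_def, rule_format, of j] assms by simp
  qed
  ultimately show "y' = y \<and> agree3 p w u" by simp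
next
  assume h: "y' = y \<and> agree3 p w u"
  show "agree2 p (w[Suc p := x', Suc (Suc p) := y']) (u[Suc p := x, Suc (Suc p) := y])" unfolding agree2_def
  proof (intro allI impI)
    fix j assume j: "j < length (w[Suc p := x', Suc (Suc p) := y'])" "j \<noteq> p \<and> j \<noteq> Suc p"
    show "w[Suc p := x', Suc (Suc p) := y'] ! j = u[Suc p := x, Suc (Suc p) := y] ! j"
    proof (cases "j = Suc (Suc p)")
      case True then show ?thesis using h assms by simp
    next
      case False then show ?thesis using h j assms unfolding agree3_def by (simp add: nth_list_update)
    qed
  qed
qed

lemma braid_op:
  fixes q :: "'a::field"
  assumes q0: "q \<noteq> 0" and p: "Suc (Suc p) < k" and w: "w \<in> words 2 k" and u: "u \<in> words 2 k"
    and A: "\<And>w u. w \<in> words 2 k \<Longrightarrow> u \<in> words 2 k \<Longrightarrow> A w u = loc p (Tl q r) w u"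
    and B: "\<And>w u. w \<in> words 2 k \<Longrightarrow> u \<in> words 2 k \<Longrightarrow> B w u = loc (Suc p) (Tl q r) w u"
  shows "tmul 2 k (tmul 2 k A B) A w u = tmul 2 k (tmul 2 k B A) B w u"
proof -
  have lw: "length w = k" and lu: "length u = k" using w u words_len by auto
  have p1: "Suc p < k" using p by simp
  have wn: "w ! j \<in> {1,2}" "u ! j \<in> {1,2}" if "j < k" for j using words_nth w u that by auto
  define a1 a2 a3 c1 c2 c3 where "a1 = w ! p" "a2 = w ! Suc p" "a3 = w ! Suc (Suc p)"
    "c1 = u ! p" "c2 = u ! Suc p" "c3 = u ! Suc (Suc p)"
  have abc: "a1 \<in> {1,2}" "a2 \<in> {1,2}" "a3 \<in> {1,2}" "c1 \<in> {1,2}" "c2 \<in> {1,2}" "c3 \<in> {1,2}"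
    unfolding a1_a2_a3_c1_c2_c3_def using wn p by auto
  have inner1: "tmul 2 k A B w (u[p := x, Suc p := y]) = (if agree3 p w u then
      (\<Sum>z\<in>{1,2}. Tl q r (a1,a2) (x,z) * Tl q r (z,a3) (y,c3)) else 0)"
    if xy: "x \<in> {1,2}" "y \<in> {1,2}" for x y
  proof -
    have u': "u[p := x, Suc p := y] \<in> words 2 k" using u xy by (simp add: words_upd)
    have "tmul 2 k A B w (u[p := x, Suc p := y]) = (\<Sum>x'\<in>{1,2}. \<Sum>y'\<in>{1,2}. Tl q r (a1,a2) (x',y') *
        B (w[p := x', Suc p := y']) (u[p := x, Suc p := y]))"
      unfolding a1_a2_a3_c1_c2_c3_def by (rule tmul_loc_left[OF p1 w u' A])
    also have "\<dots> = (\<Sum>x'\<in>{1,2}. \<Sum>y'\<in>{1,2}. Tl q r (a1,a2) (x',y') *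
        (if x' = x \<and> agree3 p w u then Tl q r (y',a3) (y,c3) else 0))"
    proof (intro sum.cong refl)
      fix x' y' :: nat assume "x' \<in> {1,2}" "y' \<in> {1,2::nat}"
      then have w': "w[p := x', Suc p := y'] \<in> words 2 k" using w by (simp add: words_upd)
      show "Tl q r (a1,a2) (x',y') * B (w[p := x', Suc p := y']) (u[p := x, Suc p := y]) =
            Tl q r (a1,a2) (x',y') * (if x' = x \<and> agree3 p w u then Tl q r (y',a3) (y,c3) else 0)"
        unfolding B[OF w' u'] loc_def using ag_b1[of p w u x' y' x y] p lw lu
        by (simp add: nth_list_update a1_a2_a3_c1_c2_c3_def)
    qed
    also have "\<dots> = (if agree3 p w u then
      (\<Sum>z\<in>{1,2}. Tl q r (a1,a2) (x,z) * Tl q r (z,a3) (y,c3)) else 0)"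
      using xy by (cases "agree3 p w u") auto
    finally show ?thesis .
  qed
  have inner2: "tmul 2 k B A w (u[Suc p := x, Suc (Suc p) := y]) = (if agree3 p w u then
      (\<Sum>z\<in>{1,2}. Tl q r (a2,a3) (z,y) * Tl q r (a1,z) (c1,x)) else 0)"
    if xy: "x \<in> {1,2}" "y \<in> {1,2}" for x y
  proof -
    have u': "u[Suc p := x, Suc (Suc p) := y] \<in> words 2 k" using u xy by (simp add: words_upd)
    have "tmul 2 k B A w (u[Suc p := x, Suc (Suc p) := y]) = (\<Sum>x'\<in>{1,2}. \<Sum>y'\<in>{1,2}. Tl q r (a2,a3) (x',y') *
        A (w[Suc p := x', Suc (Suc p) := y']) (u[Suc p := x, Suc (Suc p) := y]))"
      unfolding a1_a2_a3_c1_c2_c3_def by (rule tmul_loc_left[OF p w u' B])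
    also have "\<dots> = (\<Sum>x'\<in>{1,2}. \<Sum>y'\<in>{1,2}. Tl q r (a2,a3) (x',y') *
        (if y' = y \<and> agree3 p w u then Tl q r (a1,x') (c1,x) else 0))"
    proof (intro sum.cong refl)
      fix x' y' :: nat assume "x' \<in> {1,2}" "y' \<in> {1,2::nat}"
      then have w': "w[Suc p := x', Suc (Suc p) := y'] \<in> words 2 k" using w by (simp add: words_upd)
      show "Tl q r (a2,a3) (x',y') * A (w[Suc p := x', Suc (Suc p) := y']) (u[Suc p := x, Suc (Suc p) := y]) =
            Tl q r (a2,a3) (x',y') * (if y' = y \<and> agree3 p w u then Tl q r (a1,x') (c1,x) else 0)"
        unfolding A[OF w' u'] loc_def using ag_b2[of p w u x' y' x y] p lw lu
        by (simp add: nth_list_update a1_a2_a3_c1_c2_c3_def)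
    qed
    also have "\<dots> = (if agree3 p w u then
      (\<Sum>z\<in>{1,2}. Tl q r (a2,a3) (z,y) * Tl q r (a1,z) (c1,x)) else 0)"
      using xy by (cases "agree3 p w u") auto
    finally show ?thesis .
  qed
  have L: "tmul 2 k (tmul 2 k A B) A w u = (\<Sum>x\<in>{1,2}. \<Sum>y\<in>{1,2}.
      tmul 2 k A B w (u[p := x, Suc p := y]) * Tl q r (x,y) (c1,c2))"
    unfolding a1_a2_a3_c1_c2_c3_def by (rule tmul_loc_right[OF p1 w u A])
  also have "\<dots> = (\<Sum>x\<in>{1,2}. \<Sum>y\<in>{1,2}. (if agree3 p w u then
      (\<Sum>z\<in>{1,2}. Tl q r (a1,a2) (x,z) * Tl q r (z,a3) (y,c3)) else 0) * Tl q r (x,y) (c1,c2))"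
    by (intro sum.cong refl) (simp add: inner1)
  finally have L: "tmul 2 k (tmul 2 k A B) A w u = (if agree3 p w u then
      (\<Sum>x\<in>{1,2}. \<Sum>y\<in>{1,2}. \<Sum>z\<in>{1,2}. Tl q r (a1,a2) (x,z) * Tl q r (z,a3) (y,c3) * Tl q r (x,y) (c1,c2)) else 0)"
    by (cases "agree3 p w u") (simp only: if_True sum_distrib_right, simp)
  have "tmul 2 k (tmul 2 k B A) B w u = (\<Sum>x\<in>{1,2}. \<Sum>y\<in>{1,2}.
      tmul 2 k B A w (u[Suc p := x, Suc (Suc p) := y]) * Tl q r (x,y) (c2,c3))"
    unfolding a1_a2_a3_c1_c2_c3_def by (rule tmul_loc_right[OF p w u B])
  also have "\<dots> = (\<Sum>x\<in>{1,2}. \<Sum>y\<in>{1,2}. (if agree3 p w u then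
      (\<Sum>z\<in>{1,2}. Tl q r (a2,a3) (z,y) * Tl q r (a1,z) (c1,x)) else 0) * Tl q r (x,y) (c2,c3))"
    by (intro sum.cong refl) (simp add: inner2)
  finally have R: "tmul 2 k (tmul 2 k B A) B w u = (if agree3 p w u then
      (\<Sum>x\<in>{1,2}. \<Sum>y\<in>{1,2}. \<Sum>z\<in>{1,2}. Tl q r (a2,a3) (z,y) * Tl q r (a1,z) (c1,x) * Tl q r (x,y) (c2,c3)) else 0)"
    by (cases "agree3 p w u") (simp only: if_True sum_distrib_right, simp)
  show ?thesis unfolding L R using braid3[OF q0 abc] by simp
qed

definition agree4 :: "nat \<Rightarrow> nat \<Rightarrow> nat list \<Rightarrow> nat list \<Rightarrow> bool" where
  "agree4 p p2 w u \<longleftrightarrow> (\<forall>j<length w. j \<noteq> p \<and> j \<noteq> Suc p \<and> j \<noteq> p2 \<and> j \<noteq> Suc p2 \<longrightarrow> w ! j = u ! j)"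

lemma ag_f1:
  assumes "Suc (Suc p) \<le> p2" "Suc p2 < length w" "length u = length w"
  shows "agree2 p2 (w[p := x, Suc p := y]) u \<longleftrightarrow> (x = u ! p \<and> y = u ! Suc p \<and> agree4 p p2 w u)"
proof
  assume h: "agree2 p2 (w[p := x, Suc p := y]) u"
  have "x = u ! p" using h[unfolded agree2_def, rule_format, of p] assms by simp
  moreover have "y = u ! Suc p" using h[unfolded agree2_def, rule_format, of "Suc p"] assms by simp
  moreover have "agree4 p p2 w u" unfolding agree4_def
  proof (intro allI impI)
    fix j assume j: "j < length w" "j \<noteq> p \<and> j \<noteq> Suc p \<and> j \<noteq> p2 \<and> j \<noteq> Suc p2"
    then show "w ! j = u ! j" using h[unfolded agree2_def, rule_format, of j] assms by simp
  qed
  ultimately show "x = u ! p \<and> y = u ! Suc p \<and> agree4 p p2 w u" by simp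
next
  assume h: "x = u ! p \<and> y = u ! Suc p \<and> agree4 p p2 w u"
  show "agree2 p2 (w[p := x, Suc p := y]) u" unfolding agree2_def
  proof (intro allI impI)
    fix j assume j: "j < length (w[p := x, Suc p := y])" "j \<noteq> p2 \<and> j \<noteq> Suc p2"
    show "w[p := x, Suc p := y] ! j = u ! j"
      using h j assms unfolding agree4_def by (cases "j = p \<or> j = Suc p") (auto simp: nth_list_update)
  qed
qed

lemma ag_f2:
  assumes "Suc (Suc p) \<le> p2" "Suc p2 < length w" "length u = length w"
  shows "agree2 p2 w (u[p := x, Suc p := y]) \<longleftrightarrow> (x = w ! p \<and> y = w ! Suc p \<and> agree4 p p2 w u)"
proof
  assume h: "agree2 p2 w (u[p := x, Suc p := y])"
  have "x = w ! p" using h[unfolded agree2_def, rule_format, of p] assms by simp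
  moreover have "y = w ! Suc p" using h[unfolded agree2_def, rule_format, of "Suc p"] assms by simp
  moreover have "agree4 p p2 w u" unfolding agree4_def
  proof (intro allI impI)
    fix j assume j: "j < length w" "j \<noteq> p \<and> j \<noteq> Suc p \<and> j \<noteq> p2 \<and> j \<noteq> Suc p2"
    then show "w ! j = u ! j" using h[unfolded agree2_def, rule_format, of j] assms by simp
  qed
  ultimately show "x = w ! p \<and> y = w ! Suc p \<and> agree4 p p2 w u" by simp
next
  assume h: "x = w ! p \<and> y = w ! Suc p \<and> agree4 p p2 w u"
  show "agree2 p2 w (u[p := x, Suc p := y])" unfolding agree2_def
  proof (intro allI impI)
    fix j assume j: "j < length w" "j \<noteq> p2 \<and> j \<noteq> Suc p2"
    show "w ! j = u[p := x, Suc p := y] ! j"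
      using h j assms unfolding agree4_def by (cases "j = p \<or> j = Suc p") (auto simp: nth_list_update)
  qed
qed

lemma sum_pick2:
  assumes "c1 \<in> {1,2::nat}" "c2 \<in> {1,2::nat}"
  shows "(\<Sum>x\<in>{1,2}. \<Sum>y\<in>{1,2}. f x y * (if x = c1 \<and> y = c2 \<and> P then g else 0)) = (if P then f c1 c2 * g else (0::'a::field))"
  using assms by (elim insertE emptyE) auto

lemma sum_pick2':
  assumes "c1 \<in> {1,2::nat}" "c2 \<in> {1,2::nat}"
  shows "(\<Sum>x\<in>{1,2}. \<Sum>y\<in>{1,2}. (if x = c1 \<and> y = c2 \<and> P then g else 0) * f x y) = (if P then g * f c1 c2 else (0::'a::field))"
  using assms by (elim insertE emptyE) auto

lemma far_op:
  assumes pp: "Suc (Suc p) \<le> p2" and p2: "Suc p2 < k" and w: "w \<in> words 2 k" and u: "u \<in> words 2 k"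
    and A: "\<And>w u. w \<in> words 2 k \<Longrightarrow> u \<in> words 2 k \<Longrightarrow> A w u = loc p M w u"
    and B: "\<And>w u. w \<in> words 2 k \<Longrightarrow> u \<in> words 2 k \<Longrightarrow> B w u = loc p2 N w u"
  shows "tmul 2 k A B w u = tmul 2 k B A w u"
proof -
  have lw: "length w = k" and lu: "length u = k" using w u words_len by auto
  have p1: "Suc p < k" using pp p2 by simp
  have wn: "w ! j \<in> {1,2}" "u ! j \<in> {1,2}" if "j < k" for j using words_nth w u that by auto
  have "tmul 2 k A B w u = (\<Sum>x\<in>{1,2}. \<Sum>y\<in>{1,2}. M (w ! p, w ! Suc p) (x,y) * B (w[p := x, Suc p := y]) u)"
    by (rule tmul_loc_left[OF p1 w u A])
  also have "\<dots> = (\<Sum>x\<in>{1,2}. \<Sum>y\<in>{1,2}. M (w ! p, w ! Suc p) (x,y) *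
      (if x = u ! p \<and> y = u ! Suc p \<and> agree4 p p2 w u then N (w ! p2, w ! Suc p2) (u ! p2, u ! Suc p2) else 0))"
  proof (intro sum.cong refl)
    fix x y :: nat assume "x \<in> {1,2}" "y \<in> {1,2}"
    then have w': "w[p := x, Suc p := y] \<in> words 2 k" using w by (simp add: words_upd)
    show "M (w ! p, w ! Suc p) (x,y) * B (w[p := x, Suc p := y]) u = M (w ! p, w ! Suc p) (x,y) *
      (if x = u ! p \<and> y = u ! Suc p \<and> agree4 p p2 w u then N (w ! p2, w ! Suc p2) (u ! p2, u ! Suc p2) else 0)"
      unfolding B[OF w' u] loc_def using ag_f1[of p p2 w u x y] pp p2 lw lu by (simp add: nth_list_update)
  qed
  also have "\<dots> = (if agree4 p p2 w u then M (w ! p, w ! Suc p) (u ! p, u ! Suc p) * N (w ! p2, w ! Suc p2) (u ! p2, u ! Suc p2) else 0)"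
    by (rule sum_pick2) (use wn p1 in auto)
  finally have L: "tmul 2 k A B w u = \<dots>" .
  have "tmul 2 k B A w u = (\<Sum>x\<in>{1,2}. \<Sum>y\<in>{1,2}. B w (u[p := x, Suc p := y]) * M (x,y) (u ! p, u ! Suc p))"
    by (rule tmul_loc_right[OF p1 w u A])
  also have "\<dots> = (\<Sum>x\<in>{1,2}. \<Sum>y\<in>{1,2}.
      (if x = w ! p \<and> y = w ! Suc p \<and> agree4 p p2 w u then N (w ! p2, w ! Suc p2) (u ! p2, u ! Suc p2) else 0) * M (x,y) (u ! p, u ! Suc p))"
  proof (intro sum.cong refl)
    fix x y :: nat assume "x \<in> {1,2}" "y \<in> {1,2}"
    then have u': "u[p := x, Suc p := y] \<in> words 2 k" using u by (simp add: words_upd)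
    show "B w (u[p := x, Suc p := y]) * M (x,y) (u ! p, u ! Suc p) =
      (if x = w ! p \<and> y = w ! Suc p \<and> agree4 p p2 w u then N (w ! p2, w ! Suc p2) (u ! p2, u ! Suc p2) else 0) * M (x,y) (u ! p, u ! Suc p)"
      unfolding B[OF w u'] loc_def using ag_f2[of p p2 w u x y] pp p2 lw lu by (simp add: nth_list_update)
  qed
  also have "\<dots> = (if agree4 p p2 w u then N (w ! p2, w ! Suc p2) (u ! p2, u ! Suc p2) * M (w ! p, w ! Suc p) (u ! p, u ! Suc p) else 0)"
    by (rule sum_pick2') (use wn p1 in auto)
  finally show ?thesis unfolding L by simp
qed

lemma prod_split2:
  assumes "Suc p < k"
  shows "(\<Prod>t<k. g t) = g p * g (Suc p) * (\<Prod>t\<in>{..<k} - {p, Suc p}. (g t :: 'a::comm_monoid_mult))"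
proof -
  have "{..<k} = insert p (insert (Suc p) ({..<k} - {p, Suc p}))" using assms by auto
  then have "(\<Prod>t<k. g t) = (\<Prod>t\<in>insert p (insert (Suc p) ({..<k} - {p, Suc p})). g t)" by simp
  also have "\<dots> = g p * (g (Suc p) * (\<Prod>t\<in>{..<k} - {p, Suc p}. g t))" by simp
  finally show ?thesis by (simp add: mult.assoc)
qed

lemma tmul_sum_right: "finite J \<Longrightarrow> tmul l k A (\<lambda>w u. \<Sum>j\<in>J. F j w u) w u = (\<Sum>j\<in>J. tmul l k A (F j) w u)"
  unfolding tmul_def by (simp add: sum_distrib_left) (rule sum.swap)

lemma tmul_sum_left: "finite J \<Longrightarrow> tmul l k (\<lambda>w u. \<Sum>j\<in>J. F j w u) A w u = (\<Sum>j\<in>J. tmul l k (F j) A w u)"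
  unfolding tmul_def by (simp add: sum_distrib_right) (rule sum.swap)

lemma tmul_loc_prod_left:
  assumes p: "Suc p < k" and w: "w \<in> words 2 k" and u: "u \<in> words 2 k"
    and A: "\<And>w u. w \<in> words 2 k \<Longrightarrow> u \<in> words 2 k \<Longrightarrow> A w u = loc p M w u"
  shows "tmul 2 k A (\<lambda>w u. \<Prod>t<k. h t (w ! t) (u ! t)) w u =
     (\<Prod>t\<in>{..<k} - {p, Suc p}. h t (w ! t) (u ! t)) * L2 M (h p) (h (Suc p)) (w ! p) (w ! Suc p) (u ! p) (u ! Suc p)"
proof -
  have lw: "length w = k" using w words_len by auto
  have e: "(\<Prod>t<k. h t (w[p := x, Suc p := y] ! t) (u ! t)) =
     h p x (u ! p) * h (Suc p) y (u ! Suc p) * (\<Prod>t\<in>{..<k} - {p, Suc p}. h t (w ! t) (u ! t))" for x y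
  proof -
    have "(\<Prod>t\<in>{..<k} - {p, Suc p}. h t (w[p := x, Suc p := y] ! t) (u ! t)) = (\<Prod>t\<in>{..<k} - {p, Suc p}. h t (w ! t) (u ! t))"
      by (rule prod.cong) (auto simp: nth_list_update)
    then show ?thesis unfolding prod_split2[OF p] using p lw by simp
  qed
  have "tmul 2 k A (\<lambda>w u. \<Prod>t<k. h t (w ! t) (u ! t)) w u =
    (\<Sum>x\<in>{1,2}. \<Sum>y\<in>{1,2}. M (w ! p, w ! Suc p) (x,y) * (\<Prod>t<k. h t (w[p := x, Suc p := y] ! t) (u ! t)))"
    by (rule tmul_loc_left[OF p w u A])
  also have "\<dots> = (\<Prod>t\<in>{..<k} - {p, Suc p}. h t (w ! t) (u ! t)) * L2 M (h p) (h (Suc p)) (w ! p) (w ! Suc p) (u ! p) (u ! Suc p)"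
    unfolding e L2_def by (simp add: sum_distrib_left sum_distrib_right distrib_left mult_ac)
  finally show ?thesis .
qed

lemma tmul_loc_prod_right:
  assumes p: "Suc p < k" and w: "w \<in> words 2 k" and u: "u \<in> words 2 k"
    and A: "\<And>w u. w \<in> words 2 k \<Longrightarrow> u \<in> words 2 k \<Longrightarrow> A w u = loc p M w u"
  shows "tmul 2 k (\<lambda>w u. \<Prod>t<k. h t (w ! t) (u ! t)) A w u =
     (\<Prod>t\<in>{..<k} - {p, Suc p}. h t (w ! t) (u ! t)) * R2 M (h p) (h (Suc p)) (w ! p) (w ! Suc p) (u ! p) (u ! Suc p)"
proof -
  have lu: "length u = k" using u words_len by auto
  have e: "(\<Prod>t<k. h t (w ! t) (u[p := x, Suc p := y] ! t)) =
     h p (w ! p) x * h (Suc p) (w ! Suc p) y * (\<Prod>t\<in>{..<k} - {p, Suc p}. h t (w ! t) (u ! t))" for x y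
  proof -
    have "(\<Prod>t\<in>{..<k} - {p, Suc p}. h t (w ! t) (u[p := x, Suc p := y] ! t)) = (\<Prod>t\<in>{..<k} - {p, Suc p}. h t (w ! t) (u ! t))"
      by (rule prod.cong) (auto simp: nth_list_update)
    then show ?thesis unfolding prod_split2[OF p] using p lu by simp
  qed
  have "tmul 2 k (\<lambda>w u. \<Prod>t<k. h t (w ! t) (u ! t)) A w u =
    (\<Sum>x\<in>{1,2}. \<Sum>y\<in>{1,2}. (\<Prod>t<k. h t (w ! t) (u[p := x, Suc p := y] ! t)) * M (x,y) (u ! p, u ! Suc p))"
    by (rule tmul_loc_right[OF p w u A])
  also have "\<dots> = (\<Prod>t\<in>{..<k} - {p, Suc p}. h t (w ! t) (u ! t)) * R2 M (h p) (h (Suc p)) (w ! p) (w ! Suc p) (u ! p) (u ! Suc p)"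
    unfolding e R2_def by (simp add: sum_distrib_left sum_distrib_right distrib_left mult_ac)
  finally show ?thesis .
qed

lemma nth_rep3:
  assumes "j < k" "t < k"
  shows "(replicate j X @ [Y] @ replicate (k - j - 1) Z) ! t = (if t < j then X else if t = j then Y else Z)"
  using assms by (auto simp: nth_append)

lemma tensor_rep3:
  assumes "j < k"
  shows "tensor (replicate j X @ [Y] @ replicate (k - j - 1) Z) w u =
    (\<Prod>t<k. (if t < j then X else if t = j then Y else Z) (w ! t) (u ! t))"
proof -
  have len: "length (replicate j X @ [Y] @ replicate (k - j - 1) Z) = k" using assms by simp
  show ?thesis unfolding tensor_def len
  proof (rule prod.cong)
    fix t assume "t \<in> {..<k}"
    then have "t < k" by simp
    show "((replicate j X @ [Y] @ replicate (k - j - 1) Z) ! t) (w ! t) (u ! t) =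
      (if t < j then X else if t = j then Y else Z) (w ! t) (u ! t)" unfolding nth_rep3[OF assms \<open>t < k\<close>] ..
  qed simp
qed

lemma tensor_rep: "tensor (replicate k Y) w u = (\<Prod>t<k. Y (w ! t) (u ! t))"
  unfolding tensor_def by simp

lemma endo_single:
  assumes p: "Suc p < k" and w: "w \<in> words 2 k" and u: "u \<in> words 2 k"
    and A: "\<And>w u. w \<in> words 2 k \<Longrightarrow> u \<in> words 2 k \<Longrightarrow> A w u = loc p M w u"
    and c: "\<And>a b c d. a \<in> {1,2} \<Longrightarrow> b \<in> {1,2} \<Longrightarrow> c \<in> {1,2} \<Longrightarrow> d \<in> {1,2} \<Longrightarrow>
              L2 M Y Y a b c d = R2 M Y Y a b c d"
  shows "tmul 2 k A (tensor (replicate k Y)) w u = tmul 2 k (tensor (replicate k Y)) A w u"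
proof -
  have T: "tensor (replicate k Y) = (\<lambda>w u. \<Prod>t<k. Y (w ! t) (u ! t))"
    by (simp add: tensor_rep fun_eq_iff)
  have wn: "w ! j \<in> {1,2}" "u ! j \<in> {1,2}" if "j < k" for j using words_nth w u that by auto
  show ?thesis unfolding T
    using tmul_loc_prod_left[OF p w u A, of "\<lambda>_. Y"] tmul_loc_prod_right[OF p w u A, of "\<lambda>_. Y"]
      c[OF wn(1)[of p] wn(1)[of "Suc p"] wn(2)[of p] wn(2)[of "Suc p"]] p by simp
qed

lemma endo_delta:
  assumes p: "Suc p < k" and w: "w \<in> words 2 k" and u: "u \<in> words 2 k"
    and A: "\<And>w u. w \<in> words 2 k \<Longrightarrow> u \<in> words 2 k \<Longrightarrow> A w u = loc p M w u"
    and cYY: "\<And>a b c d. a \<in> {1,2} \<Longrightarrow> b \<in> {1,2} \<Longrightarrow> c \<in> {1,2} \<Longrightarrow> d \<in> {1,2} \<Longrightarrow>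
              L2 M Y Y a b c d = R2 M Y Y a b c d"
    and cII: "\<And>a b c d. a \<in> {1,2} \<Longrightarrow> b \<in> {1,2} \<Longrightarrow> c \<in> {1,2} \<Longrightarrow> d \<in> {1,2} \<Longrightarrow>
              L2 M I I a b c d = R2 M I I a b c d"
    and cXY: "\<And>a b c d. a \<in> {1,2} \<Longrightarrow> b \<in> {1,2} \<Longrightarrow> c \<in> {1,2} \<Longrightarrow> d \<in> {1,2} \<Longrightarrow>
              L2 M X Y a b c d + L2 M I X a b c d = R2 M X Y a b c d + R2 M I X a b c d"
  shows "tmul 2 k A (\<lambda>w u. \<Sum>j<k. tensor (replicate j I @ [X] @ replicate (k - j - 1) Y) w u) w u
       = tmul 2 k (\<lambda>w u. \<Sum>j<k. tensor (replicate j I @ [X] @ replicate (k - j - 1) Y) w u) A w u"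
proof -
  define H where "H j t = (if t < j then I else if t = j then X else Y)" for j t :: nat
  have D: "(\<lambda>w u. \<Sum>j<k. tensor (replicate j I @ [X] @ replicate (k - j - 1) Y) w u) =
      (\<lambda>w u. \<Sum>j<k. \<Prod>t<k. H j t (w ! t) (u ! t))"
    unfolding H_def by (intro ext sum.cong refl) (rule tensor_rep3, simp)
  have wn: "w ! j \<in> {1,2}" "u ! j \<in> {1,2}" if "j < k" for j using words_nth w u that by auto
  define a b c d where "a = w ! p" "b = w ! Suc p" "c = u ! p" "d = u ! Suc p"
  have abcd: "a \<in> {1,2}" "b \<in> {1,2}" "c \<in> {1,2}" "d \<in> {1,2}" unfolding a_b_c_d_def using wn p by auto
  define Oj where "Oj j = (\<Prod>t\<in>{..<k} - {p, Suc p}. H j t (w ! t) (u ! t))" for j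
  have LHS: "tmul 2 k A (\<lambda>w u. \<Sum>j<k. \<Prod>t<k. H j t (w ! t) (u ! t)) w u =
     (\<Sum>j<k. Oj j * L2 M (H j p) (H j (Suc p)) a b c d)"
    unfolding tmul_sum_right[OF finite_lessThan] Oj_def a_b_c_d_def
    by (intro sum.cong refl) (rule tmul_loc_prod_left[OF p w u A])
  have RHS: "tmul 2 k (\<lambda>w u. \<Sum>j<k. \<Prod>t<k. H j t (w ! t) (u ! t)) A w u =
     (\<Sum>j<k. Oj j * R2 M (H j p) (H j (Suc p)) a b c d)"
    unfolding tmul_sum_left[OF finite_lessThan] Oj_def a_b_c_d_def
    by (intro sum.cong refl) (rule tmul_loc_prod_right[OF p w u A])
  define f where "f j = Oj j * L2 M (H j p) (H j (Suc p)) a b c d - Oj j * R2 M (H j p) (H j (Suc p)) a b c d" for j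
  have f0: "f j = 0" if "j \<notin> {p, Suc p}" for j
  proof (cases "j < p")
    case True
    then have "H j p = Y" "H j (Suc p) = Y" unfolding H_def by auto
    then show ?thesis unfolding f_def using cYY[OF abcd] by simp
  next
    case False
    then have "j > Suc p" using that by auto
    then have "H j p = I" "H j (Suc p) = I" unfolding H_def by auto
    then show ?thesis unfolding f_def using cII[OF abcd] by simp
  qed
  have "(\<Sum>j<k. f j) = (\<Sum>j\<in>{p, Suc p}. f j)"
    by (rule sum.mono_neutral_right) (use p f0 in auto)
  also have "\<dots> = f p + f (Suc p)" by simp
  also have "\<dots> = 0"
  proof -
    have Op: "Oj p = Oj (Suc p)" unfolding Oj_def H_def by (intro prod.cong refl) auto
    have Hs: "H p p = X" "H p (Suc p) = Y" "H (Suc p) p = I" "H (Suc p) (Suc p) = X" unfolding H_def by auto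
    have "f p + f (Suc p) = Oj (Suc p) * ((L2 M X Y a b c d + L2 M I X a b c d) - (R2 M X Y a b c d + R2 M I X a b c d))"
      unfolding f_def Op Hs by (simp add: algebra_simps)
    then show ?thesis by (simp add: cXY[OF abcd])
  qed
  finally have "(\<Sum>j<k. f j) = 0" .
  then show ?thesis unfolding D LHS RHS f_def sum_subtractf by simp
qed

theorem mainTheorem4:
  fixes q :: "'a::field_char_0" and n k :: nat and r :: int
  assumes alg_closed: "\<forall>p :: 'a poly. degree p > 0 \<longrightarrow> (\<exists>x. poly p x = 0)"
    and n2: "n \<ge> 2"
    and prim: "prim_root n q"
    and k2: "k \<ge> 2"
  shows "hecke_hom_exists q n r k"
proof -
  have q0: "q \<noteq> 0" and q1: "q \<noteq> 1" using prim_props[OF prim n2] by auto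
  define T where "T = hecke_img q n r k"
  have TL: "T i w u = loc (i - 1) (Tl q r) w u"
    if "1 \<le> i" "i < k" "w \<in> words 2 k" "u \<in> words 2 k" for i w u
    unfolding T_def by (rule hecke_loc[OF prim n2 that])
  have far: "teq 2 k (tmul 2 k (T i) (T j)) (tmul 2 k (T j) (T i))"
    if "1 \<le> i" "i + 1 < j" "j \<le> k - 1" for i j
    unfolding teq_def
  proof (intro ballI)
    fix w u assume w: "w \<in> words 2 k" and u: "u \<in> words 2 k"
    show "tmul 2 k (T i) (T j) w u = tmul 2 k (T j) (T i) w u"
    proof (rule far_op[OF _ _ w u])
      show "Suc (Suc (i - 1)) \<le> j - 1" using that by simp
      show "Suc (j - 1) < k" using that k2 by simp
      show "T i w u = loc (i - 1) (Tl q r) w u" if "w \<in> words 2 k" "u \<in> words 2 k" for w u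
        using TL[of i w u] that \<open>1 \<le> i\<close> \<open>i + 1 < j\<close> \<open>j \<le> k - 1\<close> by simp
      show "T j w u = loc (j - 1) (Tl q r) w u" if "w \<in> words 2 k" "u \<in> words 2 k" for w u
        using TL[of j w u] that \<open>1 \<le> i\<close> \<open>i + 1 < j\<close> \<open>j \<le> k - 1\<close> k2 by simp
    qed
  qed
  have C1: "\<forall>i j. 1 \<le> i \<and> i \<le> k - 1 \<and> 1 \<le> j \<and> j \<le> k - 1 \<and> (i + 1 < j \<or> j + 1 < i) \<longrightarrow>
        teq 2 k (tmul 2 k (T i) (T j)) (tmul 2 k (T j) (T i))"
  proof (intro allI impI)
    fix i j assume h: "1 \<le> i \<and> i \<le> k - 1 \<and> 1 \<le> j \<and> j \<le> k - 1 \<and> (i + 1 < j \<or> j + 1 < i)"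
    show "teq 2 k (tmul 2 k (T i) (T j)) (tmul 2 k (T j) (T i))"
    proof (cases "i + 1 < j")
      case True then show ?thesis using far[of i j] h by simp
    next
      case False
      then have "teq 2 k (tmul 2 k (T j) (T i)) (tmul 2 k (T i) (T j))" using far[of j i] h by simp
      then show ?thesis unfolding teq_def by simp
    qed
  qed
  have C2: "\<forall>i. 1 \<le> i \<and> i \<le> k - 2 \<longrightarrow>
        teq 2 k (tmul 2 k (tmul 2 k (T i) (T (i + 1))) (T i))
                (tmul 2 k (tmul 2 k (T (i + 1)) (T i)) (T (i + 1)))"
  proof (intro allI impI)
    fix i assume h: "1 \<le> i \<and> i \<le> k - 2"
    have ik: "i < k" "i + 1 < k" using h k2 by arith+
    show "teq 2 k (tmul 2 k (tmul 2 k (T i) (T (i + 1))) (T i))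
                (tmul 2 k (tmul 2 k (T (i + 1)) (T i)) (T (i + 1)))"
      unfolding teq_def
    proof (intro ballI)
      fix w u assume w: "w \<in> words 2 k" and u: "u \<in> words 2 k"
      show "tmul 2 k (tmul 2 k (T i) (T (i + 1))) (T i) w u = tmul 2 k (tmul 2 k (T (i + 1)) (T i)) (T (i + 1)) w u"
      proof (rule braid_op[OF q0 _ w u])
        show "Suc (Suc (i - 1)) < k" using h k2 by arith
        show "T i w u = loc (i - 1) (Tl q r) w u" if "w \<in> words 2 k" "u \<in> words 2 k" for w u
          using TL[of i w u] that h ik by simp
        show "T (i + 1) w u = loc (Suc (i - 1)) (Tl q r) w u" if "w \<in> words 2 k" "u \<in> words 2 k" for w u
          using TL[of "i + 1" w u] that h ik by simp
      qed
    qed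
  qed
  have C3: "\<forall>i. 1 \<le> i \<and> i \<le> k - 1 \<longrightarrow>
        teq 2 k (tmul 2 k (\<lambda>w u. T i w u - tid w u) (\<lambda>w u. T i w u + inverse q * tid w u)) (\<lambda>w u. 0)"
  proof (intro allI impI)
    fix i assume h: "1 \<le> i \<and> i \<le> k - 1"
    have p: "Suc (i - 1) < k" using h k2 by arith
    have si: "Suc (i - 1) = i" using h by simp
    show "teq 2 k (tmul 2 k (\<lambda>w u. T i w u - tid w u) (\<lambda>w u. T i w u + inverse q * tid w u)) (\<lambda>w u. 0)"
      unfolding teq_def
    proof (intro ballI)
      fix w u assume w: "w \<in> words 2 k" and u: "u \<in> words 2 k"
      have "tmul 2 k (\<lambda>w u. T i w u - tid w u) (\<lambda>w u. T i w u + inverse q * tid w u) w u =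
        (if agree2 (i - 1) w u then
         (\<Sum>x\<in>{1,2}. \<Sum>y\<in>{1,2}. (Tl q r (w ! (i - 1), w ! Suc (i - 1)) (x,y) - Id2 (w ! (i - 1), w ! Suc (i - 1)) (x,y)) *
            (Tl q r (x,y) (u ! (i - 1), u ! Suc (i - 1)) + inverse q * Id2 (x,y) (u ! (i - 1), u ! Suc (i - 1)))) else 0)"
      proof (rule tmul_loc_loc[OF p w u])
        show "T i w u - tid w u = loc (i - 1) (\<lambda>ab cd. Tl q r ab cd - Id2 ab cd) w u"
          if "w \<in> words 2 k" "u \<in> words 2 k" for w u
          using TL[of i w u] tid_loc[OF that p] that h p unfolding loc_def si by auto
        show "T i w u + inverse q * tid w u = loc (i - 1) (\<lambda>ab cd. Tl q r ab cd + inverse q * Id2 ab cd) w u"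
          if "w \<in> words 2 k" "u \<in> words 2 k" for w u
          using TL[of i w u] tid_loc[OF that p] that h p unfolding loc_def si by auto
      qed
      also have "\<dots> = 0"
        using hecke_quad2[OF q0, of "w ! (i - 1)" "w ! Suc (i - 1)" "u ! (i - 1)" "u ! Suc (i - 1)" r]
          words_nth[OF w, of "i - 1"] words_nth[OF w, of "Suc (i - 1)"]
          words_nth[OF u, of "i - 1"] words_nth[OF u, of "Suc (i - 1)"] p
        by simp
      finally show "tmul 2 k (\<lambda>w u. T i w u - tid w u) (\<lambda>w u. T i w u + inverse q * tid w u) w u = 0" .
    qed
  qed
  have C4: "\<forall>i. 1 \<le> i \<and> i \<le> k - 1 \<longrightarrow> is_Dn_endo q 2 r k (T i)"
  proof (intro allI impI)
    fix i assume h: "1 \<le> i \<and> i \<le> k - 1"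
    have p: "Suc (i - 1) < k" using h k2 by arith
    have A: "T i w u = loc (i - 1) (Tl q r) w u" if "w \<in> words 2 k" "u \<in> words 2 k" for w u
      using TL[of i w u] that p h by simp
    show "is_Dn_endo q 2 r k (T i)"
      unfolding is_Dn_endo_def teq_def Delta_a_def Delta_b_def Delta_c_def Delta_d_def
    proof (intro conjI ballI)
      fix w u assume w: "w \<in> words 2 k" and u: "u \<in> words 2 k"
      show "tmul 2 k (T i) (\<lambda>w u. \<Sum>j<k. tensor (replicate j (Vid 2) @ [Va 2] @ replicate (k - j - 1) (Vb q 2 r)) w u) w u =
            tmul 2 k (\<lambda>w u. \<Sum>j<k. tensor (replicate j (Vid 2) @ [Va 2] @ replicate (k - j - 1) (Vb q 2 r)) w u) (T i) w u"
        by (rule endo_delta[OF p w u A]) (auto intro: comm_b[OF q0] comm_id comm_a[OF q0])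
      show "tmul 2 k (T i) (tensor (replicate k (Vb q 2 r))) w u = tmul 2 k (tensor (replicate k (Vb q 2 r))) (T i) w u"
        by (rule endo_single[OF p w u A]) (auto intro: comm_b[OF q0])
      show "tmul 2 k (T i) (tensor (replicate k (Vc q 2 r))) w u = tmul 2 k (tensor (replicate k (Vc q 2 r))) (T i) w u"
        by (rule endo_single[OF p w u A]) (auto intro: comm_c[OF q0])
      show "tmul 2 k (T i) (\<lambda>w u. \<Sum>j<k. tensor (replicate j (Vid 2) @ [Vd q 2] @ replicate (k - j - 1) (Vc q 2 r)) w u) w u =
            tmul 2 k (\<lambda>w u. \<Sum>j<k. tensor (replicate j (Vid 2) @ [Vd q 2] @ replicate (k - j - 1) (Vc q 2 r)) w u) (T i) w u"
        by (rule endo_delta[OF p w u A]) (auto intro: comm_c[OF q0] comm_id comm_d[OF q0 q1])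
    qed
  qed
  show ?thesis unfolding hecke_hom_exists_def Let_def T_def[symmetric]
    using C1 C2 C3 C4 by blast
qed

end
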